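(* Consider a congestion game with $m\ge1$ players and $F\ge1$ facilities in which every player has the full action space $\mathcal A_i=2^{\mathcal F}$, and let $\bm a^*$ be a pure Nash equilibrium with counts $n^*_f=n^f(\bm a^* )$. Let $S$ be a set of joint actions consisting of $\bm a^*$ together with, for each facility $f$, fixed joint actions $\bm z_f^{0}$, $\bm z_f^{-}$ (only if $n^*_f\ge1$) and $\bm z_f^{+}$ (only if $n^*_f\le m-1$) whose count vectors $(n^g(\cdot))_{g\in\mathcal F}$ agree with $(n^*_g)_{g}$ on every facility $g\ne f$ and have count on $f$ equal to $0$, $n^*_f-1$ and $n^*_f+1$ respectively (so $|S|\le 3F+1$). Let $\rho$ be uniform on $S$ and let $\bm a^1,\dots,\bm a^n$ be i.i.d. from $\rho$. Let $\delta\in(0,1)$. If $n\ge 8(3F+1)\log((3F+1)/\delta)$, then with probability at least $1-\delta$, for every $i\in[m]$ and every $\pi_i\in\Delta(\mathcal A_i)$, $$V\succeq I+\frac{n}{24F^3}\,\mathbb E_{\bm a\sim(\pi_i,\bm a^*_{-i})}\big[A_i(\bm a)A_i(\bm a)^\top\big],$$ where $(\pi_i,\bm a^*_{-i})$ denotes player $i$ playing $\pi_i$ and every other player $j$ playing $a^*_j$. That is, Assumption (Strong Covariance Domination) holds with $C_{\mathrm{game}}=\frac{1}{24F^3}$ and $\pi^*=\bm a^*$.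
   Context: Congestion game: $m$ players, finite facility set $\mathcal F$ with $F=|\mathcal F|$, action sets $\mathcal A_i\subseteq 2^{\mathcal F}$, $\mathcal A=\prod_i\mathcal A_i$, $n^f(\bm a)=|\{i: f\in a_i\}|$; facility $f$ with $\ell\ge1$ users has mean reward $r^f(\ell)$ and player $i$'s mean reward is $r_i(\bm a)=\sum_{f\in a_i}r^f(n^f(\bm a))$. A pure Nash equilibrium is a joint action $\bm a^*$ such that no player can increase $r_i$ by changing only its own action. Feature maps: let $d=mF$ and index coordinates of $\mathbb R^d$ by pairs $(f,\ell)$, $f\in\mathcal F$, $\ell\in\{1,\dots,m\}$, with standard basis vectors $e_{(f,\ell)}$. For $i\in[m]$, $A_i(\bm a)=\sum_{f\in a_i}e_{(f,n^f(\bm a))}$, and the game-level feature is $A(\bm a)=\sum_{i=1}^m A_i(\bm a)=\sum_{f:\,n^f(\bm a)\ge1}n^f(\bm a)\,e_{(f,n^f(\bm a))}$, so that the total reward has mean $\langle A(\bm a),\theta\rangle$ with $\theta_{(f,\ell)}=r^f(\ell)$. Game-level covariance matrix: $V=I+\sum_{k=1}^n A(\bm a^k)A(\bm a^k)^\top$, where $\bm a^1,\dots,\bm a^n$ are the joint actions in the dataset. $\succeq$ is the positive semidefinite (Loewner) order. *)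

theory Defs
  imports "HOL-Probability.Probability"
begin

text \<open>Congestion game with players 0..m-1 and facility type 'f (finite, F = CARD('f)).\<close>

definition joint_action :: "nat \<Rightarrow> (nat \<Rightarrow> 'f set) \<Rightarrow> bool" where
  "joint_action m a \<longleftrightarrow> (\<forall>i. m \<le> i \<longrightarrow> a i = {})"

definition cnt :: "nat \<Rightarrow> (nat \<Rightarrow> 'f set) \<Rightarrow> 'f \<Rightarrow> nat" where
  "cnt m a f = card {i. i < m \<and> f \<in> a i}"

definition player_reward :: "nat \<Rightarrow> ('f \<Rightarrow> nat \<Rightarrow> real) \<Rightarrow> (nat \<Rightarrow> 'f set) \<Rightarrow> nat \<Rightarrow> real" where
  "player_reward m r a i = (\<Sum>f\<in>a i. r f (cnt m a f))"

definition pure_NE :: "nat \<Rightarrow> ('f \<Rightarrow> nat \<Rightarrow> real) \<Rightarrow> (nat \<Rightarrow> 'f set) \<Rightarrow> bool" where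
  "pure_NE m r a \<longleftrightarrow> joint_action m a \<and>
     (\<forall>i<m. \<forall>b::'f set. player_reward m r (a(i := b)) i \<le> player_reward m r a i)"

definition coords :: "nat \<Rightarrow> ('f \<times> nat) set" where
  "coords m = UNIV \<times> {1..m}"

definition featA_i :: "nat \<Rightarrow> (nat \<Rightarrow> 'f set) \<Rightarrow> nat \<Rightarrow> ('f \<times> nat) \<Rightarrow> real" where
  "featA_i m a i = (\<lambda>(f, l). if f \<in> a i \<and> l = cnt m a f then 1 else 0)"

definition featA :: "nat \<Rightarrow> (nat \<Rightarrow> 'f set) \<Rightarrow> ('f \<times> nat) \<Rightarrow> real" where
  "featA m a = (\<lambda>p. \<Sum>i<m. featA_i m a i p)"

definition covV :: "nat \<Rightarrow> nat \<Rightarrow> (nat \<Rightarrow> nat \<Rightarrow> 'f set) \<Rightarrow> ('f \<times> nat) \<Rightarrow> ('f \<times> nat) \<Rightarrow> real" where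
  "covV m n samp = (\<lambda>p q. (if p = q then 1 else 0) + (\<Sum>k<n. featA m (samp k) p * featA m (samp k) q))"

definition quad_form :: "'i set \<Rightarrow> ('i \<Rightarrow> 'i \<Rightarrow> real) \<Rightarrow> ('i \<Rightarrow> real) \<Rightarrow> real" where
  "quad_form D M x = (\<Sum>p\<in>D. \<Sum>q\<in>D. x p * M p q * x q)"

definition loewner_ge :: "'i set \<Rightarrow> ('i \<Rightarrow> 'i \<Rightarrow> real) \<Rightarrow> ('i \<Rightarrow> 'i \<Rightarrow> real) \<Rightarrow> bool" where
  "loewner_ge D M N \<longleftrightarrow> (\<forall>x. quad_form D (\<lambda>p q. M p q - N p q) x \<ge> 0)"

definition dom_matrix :: "nat \<Rightarrow> real \<Rightarrow> (nat \<Rightarrow> 'f set) \<Rightarrow> nat \<Rightarrow> 'f set pmf \<Rightarrow> ('f \<times> nat) \<Rightarrow> ('f \<times> nat) \<Rightarrow> real" where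
  "dom_matrix m c astar i \<pi> = (\<lambda>p q. (if p = q then 1 else 0) +
     c * measure_pmf.expectation \<pi> (\<lambda>b. featA_i m (astar(i := b)) i p * featA_i m (astar(i := b)) i q))"

end

theory Submission
  imports Defs "HOL-Analysis.Harmonic_Numbers"
begin



lemma cnt_le: "cnt m a f \<le> m"
proof -
  have "{i. i < m \<and> f \<in> a i} \<subseteq> {..<m}" by auto
  then show ?thesis unfolding cnt_def using card_mono[of "{..<m}"] by fastforce
qed

lemma featA_eq: "featA m a (f,l) = (if l = cnt m a f then real (cnt m a f) else 0)"
proof -
  have "featA m a (f,l) = (\<Sum>i<m. if f \<in> a i \<and> l = cnt m a f then 1 else 0)"
    unfolding featA_def featA_i_def by simp
  also have "\<dots> = (if l = cnt m a f then (\<Sum>i\<in>{..<m}. if f \<in> a i then 1 else 0) else 0)"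
    by auto
  also have "(\<Sum>i\<in>{..<m}. if f \<in> a i then 1 else (0::real)) = real (card {i\<in>{..<m}. f \<in> a i})"
    by (simp add: sum.If_cases Int_def conj_commute)
  also have "{i\<in>{..<m}. f \<in> a i} = {i. i < m \<and> f \<in> a i}" by auto
  finally show ?thesis unfolding cnt_def by simp
qed

definition Lx :: "nat \<Rightarrow> ('f::finite \<times> nat \<Rightarrow> real) \<Rightarrow> (nat \<Rightarrow> 'f set) \<Rightarrow> real" where
  "Lx m x a = (\<Sum>f\<in>UNIV. real (cnt m a f) * x (f, cnt m a f))"

lemma featA_lin: "(\<Sum>p\<in>coords m. featA m a p * x p) = Lx m x (a :: nat \<Rightarrow> 'f::finite set)"
proof -
  have "(\<Sum>p\<in>coords m. featA m a p * x p) = (\<Sum>f\<in>UNIV. \<Sum>l\<in>{1..m}. featA m a (f,l) * x (f,l))"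
    unfolding coords_def by (simp add: sum.cartesian_product)
  also have "\<dots> = (\<Sum>f\<in>UNIV. real (cnt m a f) * x (f, cnt m a f))"
  proof (rule sum.cong[OF refl])
    fix f
    have "(\<Sum>l\<in>{1..m}. featA m a (f,l) * x (f,l)) = (\<Sum>l\<in>{1..m}. if l = cnt m a f then real (cnt m a f) * x (f, cnt m a f) else 0)"
      by (rule sum.cong) (auto simp: featA_eq)
    also have "\<dots> = (if cnt m a f \<in> {1..m} then real (cnt m a f) * x (f, cnt m a f) else 0)"
      by (simp add: sum.delta')
    also have "\<dots> = real (cnt m a f) * x (f, cnt m a f)"
      using cnt_le[of m a f] by auto
    finally show "(\<Sum>l\<in>{1..m}. featA m a (f,l) * x (f,l)) = real (cnt m a f) * x (f, cnt m a f)" .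
  qed
  finally show ?thesis unfolding Lx_def .
qed




lemma quad_gen:
  fixes D :: "'i set" and K :: "'k set"
  assumes "finite D" "finite K"
  shows "quad_form D (\<lambda>p q. (if p = q then 1 else 0) + c * (\<Sum>k\<in>K. w k * g k p * g k q)) x
     = (\<Sum>p\<in>D. x p ^ 2) + c * (\<Sum>k\<in>K. w k * (\<Sum>p\<in>D. g k p * x p) ^ 2)"
proof -
  have "quad_form D (\<lambda>p q. (if p = q then 1 else 0) + c * (\<Sum>k\<in>K. w k * g k p * g k q)) x
     = (\<Sum>p\<in>D. \<Sum>q\<in>D. (if p = q then x p * x q else 0)) + (\<Sum>p\<in>D. \<Sum>q\<in>D. c * (\<Sum>k\<in>K. w k * (g k p * x p) * (g k q * x q)))"
    unfolding quad_form_def sum.distrib[symmetric]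
    by (intro sum.cong refl) (simp add: algebra_simps sum_distrib_left sum_distrib_right)
  also have "(\<Sum>p\<in>D. \<Sum>q\<in>D. (if p = q then x p * x q else 0)) = (\<Sum>p\<in>D. x p ^ 2)"
    using assms by (simp add: power2_eq_square)
  also have "(\<Sum>p\<in>D. \<Sum>q\<in>D. c * (\<Sum>k\<in>K. w k * (g k p * x p) * (g k q * x q)))
       = c * (\<Sum>k\<in>K. w k * (\<Sum>p\<in>D. g k p * x p) * (\<Sum>q\<in>D. g k q * x q))"
    by (simp add: sum_distrib_left sum_distrib_right sum.swap[of _ K] algebra_simps)
  finally show ?thesis by (simp add: power2_eq_square mult.assoc)
qed

lemma quad_diff: "quad_form D (\<lambda>p q. M p q - N p q) x = quad_form D M x - quad_form D N x"
  unfolding quad_form_def by (simp add: algebra_simps sum_subtractf)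

lemma quad_cov:
  "quad_form (coords m) (covV m n samp) x = (\<Sum>p\<in>coords m. x p ^ 2) + (\<Sum>k<n. (Lx m x (samp k :: nat \<Rightarrow> 'f::finite set)) ^ 2)"
proof -
  have fin: "finite (coords m :: ('f \<times> nat) set)" unfolding coords_def by simp
  have "covV m n samp = (\<lambda>p q. (if p = q then 1 else 0) + 1 * (\<Sum>k\<in>{..<n}. 1 * featA m (samp k) p * featA m (samp k) q))"
    unfolding covV_def by simp
  then show ?thesis using quad_gen[OF fin, of "{..<n}" 1 "\<lambda>_. 1" "\<lambda>k. featA m (samp k)" x]
    by (simp add: featA_lin)
qed

lemma quad_dom:
  fixes astar :: "nat \<Rightarrow> 'f::finite set"
  shows "quad_form (coords m) (dom_matrix m c astar i \<pi>) x = (\<Sum>p\<in>coords m. x p ^ 2) +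
     c * (\<Sum>b\<in>UNIV. pmf \<pi> b * (\<Sum>p\<in>coords m. featA_i m (astar(i := b)) i p * x p) ^ 2)"
proof -
  have fin: "finite (coords m :: ('f::finite \<times> nat) set)" unfolding coords_def by simp
  have "dom_matrix m c astar i \<pi> = (\<lambda>p q. (if p = q then 1 else 0) + c * (\<Sum>b\<in>UNIV. pmf \<pi> b * featA_i m (astar(i := b)) i p * featA_i m (astar(i := b)) i q))"
    unfolding dom_matrix_def
    by (intro ext, subst integral_measure_pmf_real[where A=UNIV]) (auto simp: ac_simps)
  then show ?thesis using quad_gen[OF fin, of "UNIV" c "pmf \<pi>" "\<lambda>b. featA_i m (astar(i := b)) i" x]
    by simp
qed

lemma cnt_upd:
  assumes "i < m" "f \<in> b"
  shows "cnt m (astar(i := b)) f = (if f \<in> astar i then cnt m astar f else cnt m astar f + 1)"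
proof -
  have e: "{j. j < m \<and> f \<in> (astar(i := b)) j} = insert i {j. j < m \<and> f \<in> astar j}"
    using assms by auto
  have fin: "finite {j. j < m \<and> f \<in> astar j}" by simp
  show ?thesis unfolding cnt_def e using assms fin
    by (auto simp: card_insert_if)
qed

lemma cnt_pos: assumes "i < m" "f \<in> a i" shows "cnt m a f \<ge> 1"
proof -
  have "i \<in> {j. j < m \<and> f \<in> a j}" using assms by auto
  then have "{j. j < m \<and> f \<in> a j} \<noteq> {}" by auto
  then show ?thesis unfolding cnt_def by (simp add: Suc_le_eq card_gt_0_iff)
qed

lemma featAi_lin:
  fixes astar :: "nat \<Rightarrow> 'f::finite set"
  assumes "i < m"
  shows "(\<Sum>p\<in>coords m. featA_i m (astar(i := b)) i p * x p)
     = (\<Sum>f\<in>b. x (f, if f \<in> astar i then cnt m astar f else cnt m astar f + 1))"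
proof -
  let ?c = "cnt m (astar(i := b))"
  have "(\<Sum>p\<in>coords m. featA_i m (astar(i := b)) i p * x p) = (\<Sum>f\<in>UNIV. \<Sum>l\<in>{1..m}. featA_i m (astar(i := b)) i (f,l) * x (f,l))"
    unfolding coords_def by (simp add: sum.cartesian_product)
  also have "\<dots> = (\<Sum>f\<in>UNIV. if f \<in> b then x (f, ?c f) else 0)"
  proof (rule sum.cong[OF refl])
    fix f
    have "(\<Sum>l\<in>{1..m}. featA_i m (astar(i := b)) i (f,l) * x (f,l)) = (\<Sum>l\<in>{1..m}. if l = ?c f then (if f \<in> b then x (f, ?c f) else 0) else 0)"
      by (rule sum.cong) (auto simp: featA_i_def)
    also have "\<dots> = (if ?c f \<in> {1..m} then (if f \<in> b then x (f, ?c f) else 0) else 0)"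
      by (simp add: sum.delta')
    also have "\<dots> = (if f \<in> b then x (f, ?c f) else 0)"
      using cnt_le[of m "astar(i:=b)" f] cnt_pos[OF assms, of f "astar(i:=b)"] by auto
    finally show "(\<Sum>l\<in>{1..m}. featA_i m (astar(i := b)) i (f,l) * x (f,l)) = (if f \<in> b then x (f, ?c f) else 0)" .
  qed
  also have "\<dots> = (\<Sum>f\<in>b. x (f, ?c f))"
    by (simp add: sum.If_cases)
  also have "\<dots> = (\<Sum>f\<in>b. x (f, if f \<in> astar i then cnt m astar f else cnt m astar f + 1))"
    by (rule sum.cong) (auto simp: cnt_upd[OF assms])
  finally show ?thesis .
qed




lemma sq_sum_card:
  fixes b :: "'f::finite set" and y :: "'f \<Rightarrow> real"
  shows "(\<Sum>f\<in>b. y f)\<^sup>2 \<le> real CARD('f) * (\<Sum>f\<in>UNIV. (y f)\<^sup>2)"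
proof -
  have "(\<Sum>f\<in>b. y f * 1)\<^sup>2 \<le> (\<Sum>f\<in>b. (y f)\<^sup>2) * (\<Sum>f\<in>b. 1\<^sup>2)"
    by (rule Cauchy_Schwarz_ineq_sum)
  also have "\<dots> = (\<Sum>f\<in>b. (y f)\<^sup>2) * real (card b)" by simp
  also have "\<dots> \<le> (\<Sum>f\<in>UNIV. (y f)\<^sup>2) * real CARD('f)"
    by (intro mult_mono sum_mono2) (auto simp: card_mono sum_nonneg)
  finally show ?thesis by (simp add: mult.commute)
qed

lemma dom_bound:
  fixes astar :: "nat \<Rightarrow> 'f::finite set"
  assumes "i < m"
  shows "(\<Sum>b\<in>UNIV. pmf \<pi> b * (\<Sum>p\<in>coords m. featA_i m (astar(i := b)) i p * x p) ^ 2)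
     \<le> real CARD('f) * (\<Sum>f\<in>UNIV. (x (f, if f \<in> astar i then cnt m astar f else cnt m astar f + 1))\<^sup>2)"
    (is "?L \<le> ?R")
proof -
  have "?L \<le> (\<Sum>b\<in>UNIV. pmf \<pi> b * ?R)"
    unfolding featAi_lin[OF assms]
    by (intro sum_mono mult_left_mono sq_sum_card) auto
  also have "\<dots> = ?R" by (simp add: sum_distrib_right[symmetric] sum_pmf_eq_1)
  finally show ?thesis .
qed

lemma Lx_diff:
  fixes a a' :: "nat \<Rightarrow> 'f::finite set"
  assumes "\<forall>g. g \<noteq> f \<longrightarrow> cnt m a g = cnt m a' g"
  shows "Lx m x a - Lx m x a' = real (cnt m a f) * x (f, cnt m a f) - real (cnt m a' f) * x (f, cnt m a' f)"
proof -
  have "Lx m x a = real (cnt m a f) * x (f, cnt m a f) + (\<Sum>g\<in>UNIV-{f}. real (cnt m a g) * x (g, cnt m a g))"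
    unfolding Lx_def by (simp add: sum.remove)
  moreover have "Lx m x a' = real (cnt m a' f) * x (f, cnt m a' f) + (\<Sum>g\<in>UNIV-{f}. real (cnt m a' g) * x (g, cnt m a' g))"
    unfolding Lx_def by (simp add: sum.remove)
  moreover have "(\<Sum>g\<in>UNIV-{f}. real (cnt m a g) * x (g, cnt m a g)) = (\<Sum>g\<in>UNIV-{f}. real (cnt m a' g) * x (g, cnt m a' g))"
    using assms by (intro sum.cong) auto
  ultimately show ?thesis by simp
qed

lemma ineqA:
  fixes F u v k y :: real
  assumes "F \<ge> 1" "u - v = k * y" "k \<ge> 1"
  shows "y\<^sup>2 \<le> (F + 1) * (u\<^sup>2 / F + v\<^sup>2)"
proof -
  have "y\<^sup>2 \<le> (k*y)\<^sup>2"
    using assms by (simp add: power_mult_distrib) (metis mult_right_mono one_le_power zero_le_power2 mult_1)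
  also have "\<dots> = (u - v)\<^sup>2" using assms by simp
  also have "\<dots> \<le> (F + 1) * (u\<^sup>2 / F + v\<^sup>2)"
  proof -
    have "F * ((F + 1) * (u\<^sup>2 / F + v\<^sup>2) - (u - v)\<^sup>2) = (u + F * v)\<^sup>2"
      using assms by (simp add: field_simps power2_eq_square)
    then have "F * ((F + 1) * (u\<^sup>2 / F + v\<^sup>2) - (u - v)\<^sup>2) \<ge> 0" by simp
    then show ?thesis using assms by (simp add: zero_le_mult_iff)
  qed
  finally show ?thesis .
qed




lemma cnt_le_pred: assumes "i < m" "f \<notin> a i" shows "cnt m a f \<le> m - 1"
proof -
  have "{j. j < m \<and> f \<in> a j} \<subseteq> {..<m} - {i}" using assms by auto
  then have "card {j. j < m \<and> f \<in> a j} \<le> card ({..<m} - {i})" by (intro card_mono) auto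
  then show ?thesis unfolding cnt_def using assms by simp
qed

lemma S_sum:
  fixes astar :: "nat \<Rightarrow> 'f::finite set" and z0 zp :: "'f \<Rightarrow> nat \<Rightarrow> 'f set"
    and S :: "(nat \<Rightarrow> 'f set) set"
  assumes im: "i < m"
    and z0: "\<And>f. cnt m (z0 f) f = 0 \<and> (\<forall>g. g \<noteq> f \<longrightarrow> cnt m (z0 f) g = cnt m astar g)"
    and zp: "\<And>f. cnt m astar f \<le> m - 1 \<Longrightarrow> cnt m (zp f) f = cnt m astar f + 1 \<and>
                  (\<forall>g. g \<noteq> f \<longrightarrow> cnt m (zp f) g = cnt m astar g)"
    and SS: "astar \<in> S" "range z0 \<subseteq> S" "{zp f | f. cnt m astar f \<le> m - 1} \<subseteq> S" "finite S"
  shows "(\<Sum>f\<in>UNIV. (x (f, if f \<in> astar i then cnt m astar f else cnt m astar f + 1))\<^sup>2)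
      \<le> (real CARD('f) + 1) * (\<Sum>s\<in>S. (Lx m x s)\<^sup>2)"
proof -
  define F where "F = real CARD('f)"
  have F1: "F \<ge> 1" unfolding F_def by (simp add: Suc_le_eq)
  define ns where "ns f = cnt m astar f" for f
  define u where "u = Lx m x astar"
  define v where "v f = Lx m x (z0 f)" for f
  define w where "w f = Lx m x (zp f)" for f
  define P where "P = {f. ns f \<ge> 1}"
  define B where "B = {f. f \<notin> astar i}"
  define ell where "ell f = (if f \<in> astar i then ns f else ns f + 1)" for f
  have B_le: "ns f \<le> m - 1" if "f \<in> B" for f
    using cnt_le_pred[OF im, of f astar] that unfolding B_def ns_def by auto
  have perf: "(x (f, ell f))\<^sup>2 \<le> (F + 1) * (u\<^sup>2 / F + (if f \<in> P then (v f)\<^sup>2 else 0) + (if f \<in> B then (w f)\<^sup>2 else 0))" for f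
  proof (cases "f \<in> astar i")
    case True
    have n1: "ns f \<ge> 1" using cnt_pos[of i m f astar, OF im True] unfolding ns_def .
    have "u - v f = real (ns f) * x (f, ns f)"
      unfolding u_def v_def ns_def using Lx_diff[of f m astar "z0 f" x] z0[of f] by auto
    then have "(x (f, ns f))\<^sup>2 \<le> (F + 1) * (u\<^sup>2 / F + (v f)\<^sup>2)"
      by (intro ineqA[OF F1, of u "v f" "real (ns f)"]) (use n1 in auto)
    moreover have "0 \<le> (F + 1) * (if f \<in> B then (w f)\<^sup>2 else 0)" using F1 by simp
    ultimately show ?thesis using True n1 unfolding ell_def P_def by (simp add: algebra_simps)
  next
    case False
    then have fB: "f \<in> B" unfolding B_def by simp
    note zpf = zp[OF B_le[OF fB, unfolded ns_def]]
    show ?thesis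
    proof (cases "ns f \<ge> 1")
      case True
      have "w f - v f = real (ns f + 1) * x (f, ns f + 1)"
        unfolding w_def v_def ns_def using Lx_diff[of f m "zp f" "z0 f" x] z0[of f] zpf by auto
      then have "(x (f, ns f + 1))\<^sup>2 \<le> (1 + 1) * ((w f)\<^sup>2 / 1 + (v f)\<^sup>2)"
        by (intro ineqA[of 1 "w f" "v f" "real (ns f + 1)"]) auto
      moreover have "(1 + 1) * ((w f)\<^sup>2 / 1 + (v f)\<^sup>2) \<le> (F + 1) * (u\<^sup>2 / F + (v f)\<^sup>2 + (w f)\<^sup>2)"
        using F1 by (intro mult_mono) (auto intro!: add_nonneg_nonneg)
      ultimately show ?thesis using False True fB unfolding ell_def P_def by simp
    next
      case False2: False
      have "w f - u = real (ns f + 1) * x (f, ns f + 1)"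
        unfolding w_def u_def ns_def using Lx_diff[of f m "zp f" astar x] zpf False2 by (auto simp: ns_def)
      moreover have "ns f = 0" using False2 by simp
      ultimately have "u - w f = 1 * (- x (f, ns f + 1))" by simp
      then have "(- x (f, ns f + 1))\<^sup>2 \<le> (F + 1) * (u\<^sup>2 / F + (w f)\<^sup>2)"
        by (intro ineqA[OF F1]) auto
      then show ?thesis using False False2 fB unfolding ell_def P_def by simp
    qed
  qed
  have "(\<Sum>f\<in>UNIV. (x (f, ell f))\<^sup>2) \<le> (\<Sum>f\<in>UNIV. (F + 1) * (u\<^sup>2 / F + (if f \<in> P then (v f)\<^sup>2 else 0) + (if f \<in> B then (w f)\<^sup>2 else 0)))"
    by (intro sum_mono perf)
  also have "\<dots> = (F + 1) * (u\<^sup>2 + (\<Sum>f\<in>P. (v f)\<^sup>2) + (\<Sum>f\<in>B. (w f)\<^sup>2))"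
    using F1 unfolding F_def by (simp add: sum_distrib_left[symmetric] sum.distrib sum.If_cases)
  also have "u\<^sup>2 + (\<Sum>f\<in>P. (v f)\<^sup>2) + (\<Sum>f\<in>B. (w f)\<^sup>2) \<le> (\<Sum>s\<in>S. (Lx m x s)\<^sup>2)"
  proof -
    have cz0: "cnt m (z0 f) g = (if g = f then 0 else ns g)" for f g using z0[of f] unfolding ns_def by auto
    have czp: "cnt m (zp f) g = (if g = f then ns f + 1 else ns g)" if "f \<in> B" for f g
      using zp[OF B_le[OF that, unfolded ns_def]] unfolding ns_def by auto
    have inj0: "inj_on z0 P"
    proof (rule inj_onI)
      fix f g assume "f \<in> P" "g \<in> P" "z0 f = z0 g"
      then show "f = g" using cz0[of f f] cz0[of g f] unfolding P_def by (auto split: if_splits)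
    qed
    have injp: "inj_on zp B"
    proof (rule inj_onI)
      fix f g assume "f \<in> B" "g \<in> B" "zp f = zp g"
      then show "f = g" using czp[of f f] czp[of g f] by (auto split: if_splits)
    qed
    have d1: "astar \<notin> z0 ` P"
    proof
      assume "astar \<in> z0 ` P" then obtain f where "f \<in> P" "astar = z0 f" by auto
      then show False using cz0[of f f] unfolding P_def ns_def by auto
    qed
    have d2: "astar \<notin> zp ` B"
    proof
      assume "astar \<in> zp ` B" then obtain f where "f \<in> B" "astar = zp f" by auto
      then show False using czp[of f f] unfolding ns_def by auto
    qed
    have d3: "z0 ` P \<inter> zp ` B = {}"
    proof (rule ccontr)
      assume "z0 ` P \<inter> zp ` B \<noteq> {}"
      then obtain f g where fg: "f \<in> P" "g \<in> B" "z0 f = zp g" by auto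
      show False
      proof (cases "f = g")
        case True then show ?thesis using fg cz0[of f f] czp[of g f] by auto
      next
        case False then show ?thesis using fg cz0[of f f] czp[of g f] unfolding P_def by auto
      qed
    qed
    have T_S: "insert astar (z0 ` P \<union> zp ` B) \<subseteq> S"
      using SS B_le unfolding ns_def by blast
    have "u\<^sup>2 + (\<Sum>f\<in>P. (v f)\<^sup>2) + (\<Sum>f\<in>B. (w f)\<^sup>2) = (\<Sum>s\<in>insert astar (z0 ` P \<union> zp ` B). (Lx m x s)\<^sup>2)"
      using d1 d2 d3 inj0 injp unfolding u_def v_def w_def
      by (simp add: sum.union_disjoint sum.reindex)
    also have "\<dots> \<le> (\<Sum>s\<in>S. (Lx m x s)\<^sup>2)"
      using T_S SS(4) by (intro sum_mono2) auto
    finally show ?thesis .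
  qed
  finally have "(\<Sum>f\<in>UNIV. (x (f, ell f))\<^sup>2) \<le> (F + 1) * (\<Sum>s\<in>S. (Lx m x s)\<^sup>2)"
    using F1 by (simp add: mult_left_mono)
  then show ?thesis unfolding ell_def ns_def F_def .
qed




lemma group_samples:
  fixes h :: "'a \<Rightarrow> real" and n :: nat
  assumes "finite S" "\<forall>k<n. samp k \<in> S"
  shows "(\<Sum>k<n. h (samp k)) = (\<Sum>s\<in>S. real (card {k\<in>{..<n}. samp k = s}) * h s)"
proof -
  have "(\<Sum>k<n. h (samp k)) = (\<Sum>s\<in>S. \<Sum>k\<in>{k. k \<in> {..<n} \<and> samp k = s}. h (samp k))"
    using assms by (intro sum.group[symmetric]) auto
  also have "\<dots> = (\<Sum>s\<in>S. real (card {k\<in>{..<n}. samp k = s}) * h s)"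
    by (intro sum.cong refl) simp
  finally show ?thesis .
qed

lemma det:
  fixes astar :: "nat \<Rightarrow> 'f::finite set" and z0 zp :: "'f \<Rightarrow> nat \<Rightarrow> 'f set"
    and S :: "(nat \<Rightarrow> 'f set) set"
  assumes im: "i < m"
    and z0: "\<And>f. cnt m (z0 f) f = 0 \<and> (\<forall>g. g \<noteq> f \<longrightarrow> cnt m (z0 f) g = cnt m astar g)"
    and zp: "\<And>f. cnt m astar f \<le> m - 1 \<Longrightarrow> cnt m (zp f) f = cnt m astar f + 1 \<and>
                  (\<forall>g. g \<noteq> f \<longrightarrow> cnt m (zp f) g = cnt m astar g)"
    and SS: "astar \<in> S" "range z0 \<subseteq> S" "{zp f | f. cnt m astar f \<le> m - 1} \<subseteq> S" "finite S"
    and samp: "\<forall>k<n. samp k \<in> S"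
    and cnts: "\<forall>s\<in>S. real n / (2 * real (card S)) \<le> real (card {k\<in>{..<n}. samp k = s})"
    and cardS: "card S \<le> 3 * CARD('f) + 1"
  shows "loewner_ge (coords m) (covV m n samp) (dom_matrix m (real n / (24 * real CARD('f) ^ 3)) astar i \<pi>)"
  unfolding loewner_ge_def
proof
  fix x :: "'f \<times> nat \<Rightarrow> real"
  define F where "F = real CARD('f)"
  have F1: "F \<ge> 1" unfolding F_def by (simp add: Suc_le_eq)
  define K where "K = real (card S)"
  have K1: "K \<ge> 1" unfolding K_def using SS by (simp add: Suc_le_eq card_gt_0_iff) blast
  have K3: "K \<le> 3 * F + 1" unfolding K_def F_def using cardS by simp
  define c where "c = real n / (24 * F ^ 3)"
  have c0: "c \<ge> 0" unfolding c_def using F1 by simp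
  define Y where "Y = (\<Sum>f\<in>UNIV. (x (f, if f \<in> astar i then cnt m astar f else cnt m astar f + 1))\<^sup>2)"
  have Y0: "Y \<ge> 0" unfolding Y_def by (simp add: sum_nonneg)
  define W where "W = (\<Sum>s\<in>S. (Lx m x s)\<^sup>2)"
  have W0: "W \<ge> 0" unfolding W_def by (simp add: sum_nonneg)
  have YW: "Y \<le> (F + 1) * W" unfolding Y_def W_def F_def by (rule S_sum[OF im z0 zp SS])
  define E where "E = (\<Sum>b\<in>UNIV. pmf \<pi> b * (\<Sum>p\<in>coords m. featA_i m (astar(i := b)) i p * x p) ^ 2)"
  have EY: "E \<le> F * Y" unfolding E_def Y_def F_def by (rule dom_bound[OF im])
  have "(\<Sum>k<n. (Lx m x (samp k))\<^sup>2) = (\<Sum>s\<in>S. real (card {k\<in>{..<n}. samp k = s}) * (Lx m x s)\<^sup>2)"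
    by (rule group_samples[OF SS(4) samp])
  also have "\<dots> \<ge> (\<Sum>s\<in>S. (real n / (2 * K)) * (Lx m x s)\<^sup>2)"
    using cnts unfolding K_def by (intro sum_mono mult_right_mono) auto
  finally have G: "(\<Sum>k<n. (Lx m x (samp k))\<^sup>2) \<ge> (real n / (2 * K)) * W"
    unfolding W_def by (simp add: sum_distrib_left)
  have "c * E \<le> c * (F * Y)" using EY c0 by (rule mult_left_mono)
  also have "\<dots> \<le> c * (F * ((F + 1) * W))" using YW F1 c0 by (intro mult_left_mono) auto
  also have "\<dots> \<le> (real n / (2 * K)) * W"
  proof -
    have "c * (F * (F + 1)) \<le> real n / (2 * K)"
    proof -
      have "2 * K * (F + 1) \<le> 2 * (3 * F + 1) * (F + 1)" using K3 F1 by (intro mult_right_mono) auto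
      also have "\<dots> \<le> 24 * F ^ 2"
      proof -
        have FF: "F \<le> F * F" using mult_right_mono[OF F1, of F] F1 by simp
        have e1: "2 * (3 * F + 1) * (F + 1) = 6 * (F*F) + 8 * F + 2" by (simp add: algebra_simps)
        have e2: "24 * F ^ 2 = 24 * (F * F)" by (simp add: power2_eq_square)
        show ?thesis unfolding e1 e2 using FF F1 by linarith
      qed
      finally have h: "2 * K * (F + 1) \<le> 24 * F ^ 2" .
      have "c * (F * (F + 1)) = real n * (F + 1) / (24 * F ^ 2)"
        unfolding c_def using F1 by (simp add: field_simps power2_eq_square power3_eq_cube)
      also have "\<dots> \<le> real n / (2 * K)"
      proof -
        have m: "real n * (2 * K * (F + 1)) \<le> real n * (24 * F ^ 2)" using h by (intro mult_left_mono) auto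
        have m': "K * (real n * 2) + F * (K * (real n * 2)) \<le> real n * (F\<^sup>2 * 24)" using m by (simp add: algebra_simps)
        show ?thesis using m' F1 K1 by (simp add: field_simps)
      qed
      finally show ?thesis .
    qed
    then show ?thesis using W0 by (metis mult.assoc mult_right_mono)
  qed
  also have "\<dots> \<le> (\<Sum>k<n. (Lx m x (samp k))\<^sup>2)" using G .
  finally have key: "c * E \<le> (\<Sum>k<n. (Lx m x (samp k))\<^sup>2)" .
  show "0 \<le> quad_form (coords m) (\<lambda>p q. covV m n samp p q - dom_matrix m (real n / (24 * real CARD('f) ^ 3)) astar i \<pi> p q) x"
    unfolding quad_diff quad_cov quad_dom using key unfolding c_def E_def F_def by simp
qed




lemma chernoff:
  fixes S :: "'a set" and n :: nat and s :: 'a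
  assumes fin: "finite S" and sS: "s \<in> S"
  shows "measure_pmf.prob (Pi_pmf {..<n} d (\<lambda>_. pmf_of_set S))
           {samp. real (card {k\<in>{..<n}. samp k = s}) < real n / (2 * real (card S))}
         \<le> exp (- (real n / real (card S)) / 8)"
proof -
  define K where "K = real (card S)"
  have Sne: "S \<noteq> {}" using sS by auto
  have K1: "K \<ge> 1" unfolding K_def using fin Sne by (simp add: Suc_le_eq card_gt_0_iff)
  define M where "M = Pi_pmf {..<n} d (\<lambda>_. pmf_of_set S)"
  define g where "g y = (if y = s then 1/2 else (1::real))" for y
  define X where "X samp = card {k\<in>{..<n}. samp k = s}" for samp :: "nat \<Rightarrow> 'a"
  define Y where "Y samp = (\<Prod>k\<in>{..<n}. g (samp k))" for samp :: "nat \<Rightarrow> 'a"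
  have Y_eq: "Y samp = (1/2) ^ X samp" for samp
    unfolding Y_def X_def g_def by (simp add: prod.If_cases Int_def conj_commute)
  have intg: "integrable (measure_pmf (pmf_of_set S)) g"
    using fin Sne by (intro integrable_measure_pmf_finite) simp
  have Eg: "measure_pmf.expectation (pmf_of_set S) g = 1 - 1 / (2 * K)"
  proof -
    have "measure_pmf.expectation (pmf_of_set S) g = sum g S / K"
      unfolding K_def using fin Sne by (simp add: integral_pmf_of_set)
    also have "sum g S = g s + sum g (S - {s})" using fin sS by (simp add: sum.remove)
    also have "sum g (S - {s}) = K - 1"
    proof -
      have "card S \<ge> 1" using fin sS by (metis One_nat_def Suc_leI card_gt_0_iff empty_iff)
      then show ?thesis unfolding g_def K_def using fin sS by (simp add: card_Diff_singleton of_nat_diff)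
    qed
    also have "g s + (K - 1) = K - 1/2" unfolding g_def by simp
    finally show ?thesis using K1 by (simp add: field_simps)
  qed
  have EY: "measure_pmf.expectation M Y = (1 - 1 / (2 * K)) ^ n"
    unfolding M_def Y_def
    by (subst expectation_prod_Pi_pmf) (use intg in \<open>auto simp: Eg g_def\<close>)
  have intY: "integrable (measure_pmf M) Y"
    unfolding M_def Y_def by (rule integrable_prod_Pi_pmf) (use intg in auto)
  define t where "t = real n / (2 * K)"
  define c where "c = 2 powr (- t)"
  have c0: "c > 0" unfolding c_def by simp
  have sub: "{samp. real (X samp) < t} \<subseteq> {samp \<in> space (measure_pmf M). Y samp \<ge> c}"
  proof
    fix samp assume "samp \<in> {samp. real (X samp) < t}"
    then have lt: "real (X samp) < t" by simp
    have y1: "Y samp = 1 / 2 ^ X samp" unfolding Y_eq by (simp add: power_one_over)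
    have y2: "(2::real) powr real (X samp) = 2 ^ X samp" by (simp add: powr_realpow)
    have "Y samp = 2 powr (- real (X samp))"
      unfolding y1 powr_minus_divide y2 by simp
    also have "\<dots> \<ge> 2 powr (- t)" using lt by (intro powr_mono) auto
    finally show "samp \<in> {samp \<in> space (measure_pmf M). Y samp \<ge> c}" unfolding c_def by simp
  qed
  have "measure_pmf.prob M {samp. real (X samp) < t} \<le> measure_pmf.prob M {samp \<in> space (measure_pmf M). Y samp \<ge> c}"
    using sub by (intro measure_pmf.finite_measure_mono) auto
  also have "\<dots> \<le> measure_pmf.expectation M Y / c"
    by (rule integral_Markov_inequality_measure[OF intY]) (auto simp: Y_def g_def c0 intro!: prod_nonneg)
  also have "\<dots> = (1 - 1 / (2 * K)) ^ n * 2 powr t"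
    unfolding EY c_def by (simp only: powr_minus divide_inverse inverse_inverse_eq)
  also have "\<dots> \<le> exp (- (real n / K) / 8)"
  proof -
    have a: "(1 - 1 / (2 * K)) ^ n \<le> exp (- 1 / (2 * K)) ^ n"
    proof (rule power_mono)
      show "1 - 1 / (2 * K) \<le> exp (- 1 / (2 * K))" using exp_ge_add_one_self[of "- 1 / (2 * K)"] by simp
      show "0 \<le> 1 - 1 / (2 * K)" using K1 by (simp add: field_simps)
    qed
    have b: "exp (- 1 / (2 * K)) ^ n = exp (- t)" unfolding t_def by (simp add: exp_of_nat_mult[symmetric] field_simps)
    have c: "2 powr t = exp (t * ln 2)" by (simp add: powr_def)
    have t0: "t \<ge> 0" unfolding t_def using K1 by simp
    have "- t + t * ln 2 \<le> - (real n / K) / 8"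
    proof -
      have "t * ln 2 \<le> t * (25/36)" using t0 ln2_le_25_over_36 by (intro mult_left_mono) auto
      moreover have "real n / K = 2 * t" unfolding t_def using K1 by simp
      ultimately show ?thesis using t0 by simp
    qed
    then have "exp (- t) * exp (t * ln 2) \<le> exp (- (real n / K) / 8)" by (simp add: exp_add[symmetric])
    moreover have "(1 - 1 / (2 * K)) ^ n * 2 powr t \<le> exp (- t) * exp (t * ln 2)"
    proof -
      have "(1 - 1 / (2 * K)) ^ n \<le> exp (- t)" using a b by simp
      then have "(1 - 1 / (2 * K)) ^ n * 2 powr t \<le> exp (- t) * 2 powr t" by (rule mult_right_mono) simp
      then show ?thesis unfolding c .
    qed
    ultimately show ?thesis by linarith
  qed
  finally show ?thesis unfolding M_def X_def t_def K_def .
qed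




lemma final_bound:
  fixes K F n \<delta> :: real
  assumes K1: "K \<ge> 1" and KF: "K \<le> 3 * F + 1" and d: "0 < \<delta>" "\<delta> < 1"
    and nl: "n \<ge> 8 * (3 * F + 1) * ln ((3 * F + 1) / \<delta>)"
  shows "K * exp (- (n / K) / 8) \<le> \<delta>"
proof -
  have l0: "ln (K / \<delta>) \<ge> 0" using K1 d by (simp add: field_simps)
  have l1: "ln (K / \<delta>) \<le> ln ((3 * F + 1) / \<delta>)" using K1 KF d by (simp add: divide_right_mono)
  have "K * ln (K / \<delta>) \<le> (3 * F + 1) * ln ((3 * F + 1) / \<delta>)"
    using l0 l1 KF K1 by (intro mult_mono) auto
  then have "8 * K * ln (K / \<delta>) \<le> n" using nl by linarith
  then have "ln (K / \<delta>) \<le> (n / K) / 8" using K1 by (simp add: field_simps)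
  then have "exp (- (n / K) / 8) \<le> exp (- ln (K / \<delta>))" by simp
  also have "\<dots> = \<delta> / K" using K1 d by (simp add: exp_minus)
  finally show ?thesis using K1 by (simp add: field_simps)
qed




theorem mainTheorem9:
  fixes m :: nat and r :: "'f::finite \<Rightarrow> nat \<Rightarrow> real"
    and astar :: "nat \<Rightarrow> 'f set"
    and z0 zm zp :: "'f \<Rightarrow> nat \<Rightarrow> 'f set"
    and S :: "(nat \<Rightarrow> 'f set) set"
    and n :: nat and \<delta> :: real
  assumes m_pos: "m \<ge> 1"
    and NE: "pure_NE m r astar"
    and z0: "\<And>f. joint_action m (z0 f) \<and> cnt m (z0 f) f = 0 \<and>
                  (\<forall>g. g \<noteq> f \<longrightarrow> cnt m (z0 f) g = cnt m astar g)"
    and zm: "\<And>f. cnt m astar f \<ge> 1 \<Longrightarrow> joint_action m (zm f) \<and>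
                  cnt m (zm f) f = cnt m astar f - 1 \<and>
                  (\<forall>g. g \<noteq> f \<longrightarrow> cnt m (zm f) g = cnt m astar g)"
    and zp: "\<And>f. cnt m astar f \<le> m - 1 \<Longrightarrow> joint_action m (zp f) \<and>
                  cnt m (zp f) f = cnt m astar f + 1 \<and>
                  (\<forall>g. g \<noteq> f \<longrightarrow> cnt m (zp f) g = cnt m astar g)"
    and S_def: "S = {astar} \<union> range z0 \<union> {zm f | f. cnt m astar f \<ge> 1}
                  \<union> {zp f | f. cnt m astar f \<le> m - 1}"
    and \<delta>: "0 < \<delta>" "\<delta> < 1"
    and n_large: "real n \<ge> 8 * (3 * real CARD('f) + 1) * ln ((3 * real CARD('f) + 1) / \<delta>)"
  shows "measure_pmf.prob (Pi_pmf {..<n} (\<lambda>_. {}) (\<lambda>_. pmf_of_set S))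
           {samp. \<forall>i<m. \<forall>\<pi> :: 'f set pmf.
              loewner_ge (coords m) (covV m n samp)
                (dom_matrix m (real n / (24 * real CARD('f) ^ 3)) astar i \<pi>)}
         \<ge> 1 - \<delta>"
proof -
  define M where "M = Pi_pmf {..<n} (\<lambda>_. {}) (\<lambda>_. pmf_of_set S)"
  define K where "K = real (card S)"
  define Tgt where "Tgt = {samp. \<forall>i<m. \<forall>\<pi> :: 'f set pmf.
              loewner_ge (coords m) (covV m n samp)
                (dom_matrix m (real n / (24 * real CARD('f) ^ 3)) astar i \<pi>)}"
  have eq1: "{zm f | f. cnt m astar f \<ge> 1} = zm ` {f. cnt m astar f \<ge> 1}" by auto
  have eq2: "{zp f | f. cnt m astar f \<le> m - 1} = zp ` {f. cnt m astar f \<le> m - 1}" by auto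
  have finS: "finite S" unfolding S_def eq1 eq2 by simp
  have astarS: "astar \<in> S" unfolding S_def by simp
  have cardS: "card S \<le> 3 * CARD('f) + 1"
  proof -
    have "card S \<le> card ({astar} \<union> range z0 \<union> zm ` {f. cnt m astar f \<ge> 1}) + card (zp ` {f. cnt m astar f \<le> m - 1})"
      unfolding S_def eq1 eq2 by (rule card_Un_le)
    also have "\<dots> \<le> card ({astar} \<union> range z0) + card (zm ` {f. cnt m astar f \<ge> 1}) + card (zp ` {f. cnt m astar f \<le> m - 1})"
      by (intro add_right_mono card_Un_le)
    also have "\<dots> \<le> (card {astar} + card (range z0)) + card (zm ` {f. cnt m astar f \<ge> 1}) + card (zp ` {f. cnt m astar f \<le> m - 1})"
      by (intro add_right_mono card_Un_le)
    also have "\<dots> \<le> (1 + CARD('f)) + CARD('f) + CARD('f)"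
    proof -
      have cimg: "card (g ` A) \<le> CARD('f)" for g :: "'f \<Rightarrow> nat \<Rightarrow> 'f set" and A :: "'f set"
        using card_image_le[of A g] card_mono[of UNIV A] by simp
      show ?thesis using cimg[of z0 UNIV] cimg[of zm] cimg[of zp] by (intro add_mono) auto
    qed
    finally show ?thesis by simp
  qed
  have K1: "K \<ge> 1" unfolding K_def using finS astarS by (simp add: Suc_le_eq card_gt_0_iff) blast
  define Good where "Good = {samp. (\<forall>k<n. samp k \<in> S) \<and>
      (\<forall>s\<in>S. real n / (2 * real (card S)) \<le> real (card {k\<in>{..<n}. samp k = s}))}"
  have GT: "Good \<subseteq> Tgt"
  proof
    fix samp assume "samp \<in> Good"
    then have s1: "\<forall>k<n. samp k \<in> S" and s2: "\<forall>s\<in>S. real n / (2 * real (card S)) \<le> real (card {k\<in>{..<n}. samp k = s})"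
      unfolding Good_def by auto
    show "samp \<in> Tgt" unfolding Tgt_def
    proof (intro CollectI allI impI)
      fix i \<pi> assume im: "i < m"
      show "loewner_ge (coords m) (covV m n samp) (dom_matrix m (real n / (24 * real CARD('f) ^ 3)) astar i \<pi>)"
      proof (rule det[OF im _ _ _ _ _ finS s1 s2 cardS])
        show "\<And>f. cnt m (z0 f) f = 0 \<and> (\<forall>g. g \<noteq> f \<longrightarrow> cnt m (z0 f) g = cnt m astar g)" using z0 by blast
        show "\<And>f. cnt m astar f \<le> m - 1 \<Longrightarrow> cnt m (zp f) f = cnt m astar f + 1 \<and>
                  (\<forall>g. g \<noteq> f \<longrightarrow> cnt m (zp f) g = cnt m astar g)" using zp by blast
        show "astar \<in> S" by (rule astarS)
        show "range z0 \<subseteq> S" unfolding S_def by blast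
        show "{zp f | f. cnt m astar f \<le> m - 1} \<subseteq> S" unfolding S_def by blast
      qed
    qed
  qed
  define B0 where "B0 = {samp :: nat \<Rightarrow> nat \<Rightarrow> 'f set. \<exists>k<n. samp k \<notin> S}"
  define Bs where "Bs s = {samp :: nat \<Rightarrow> nat \<Rightarrow> 'f set. real (card {k\<in>{..<n}. samp k = s}) < real n / (2 * real (card S))}" for s
  have compl: "UNIV - Good \<subseteq> B0 \<union> (\<Union>s\<in>S. Bs s)"
    unfolding Good_def B0_def Bs_def by (auto simp: not_le)
  have pB0: "measure_pmf.prob M B0 = 0"
  proof -
    have "set_pmf M \<subseteq> PiE_dflt {..<n} (\<lambda>_. {}) (\<lambda>_. S)"
    proof -
      have "S \<noteq> {}" using astarS by auto
      then have "set_pmf (pmf_of_set S) = S" using finS by simp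
      then show ?thesis unfolding M_def by (subst set_Pi_pmf) auto
    qed
    then have "disjnt (set_pmf M) B0" unfolding B0_def disjnt_def PiE_dflt_def by auto
    then show ?thesis by (simp add: measure_pmf_zero_iff disjnt_def)
  qed
  have pBs: "measure_pmf.prob M (\<Union>s\<in>S. Bs s) \<le> K * exp (- (real n / K) / 8)"
  proof -
    have "measure_pmf.prob M (\<Union>s\<in>S. Bs s) \<le> (\<Sum>s\<in>S. measure_pmf.prob M (Bs s))"
      using finS by (intro measure_pmf.finite_measure_subadditive_finite) auto
    also have "\<dots> \<le> (\<Sum>s\<in>S. exp (- (real n / K) / 8))"
      unfolding M_def Bs_def K_def using finS by (intro sum_mono chernoff) auto
    also have "\<dots> = K * exp (- (real n / K) / 8)" unfolding K_def by simp
    finally show ?thesis .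
  qed
  have Kd: "K * exp (- (real n / K) / 8) \<le> \<delta>"
    by (rule final_bound[OF K1 _ \<delta> n_large]) (use cardS in \<open>simp add: K_def\<close>)
  have "measure_pmf.prob M (UNIV - Good) \<le> measure_pmf.prob M (B0 \<union> (\<Union>s\<in>S. Bs s))"
    using compl by (intro measure_pmf.finite_measure_mono) auto
  also have "\<dots> \<le> measure_pmf.prob M B0 + measure_pmf.prob M (\<Union>s\<in>S. Bs s)"
    by (rule measure_Un_le) auto
  also have "\<dots> \<le> \<delta>" using pB0 pBs Kd by simp
  finally have "measure_pmf.prob M (UNIV - Good) \<le> \<delta>" .
  moreover have "measure_pmf.prob M (UNIV - Good) = 1 - measure_pmf.prob M Good"
    using measure_pmf.prob_compl[of Good M] by simp
  moreover have "measure_pmf.prob M Good \<le> measure_pmf.prob M Tgt"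
    using GT by (intro measure_pmf.finite_measure_mono) auto
  ultimately have "measure_pmf.prob M Tgt \<ge> 1 - \<delta>" by linarith
  then show ?thesis unfolding M_def Tgt_def .
qed


end
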